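(* Let $\mu_1\in\mathbb{R}$, $\sigma_1,\sigma_a,\sigma_b>0$ and $k>0$. Consider three stocks with positive prices $p_{1t},p_{2t},p_{3t}$ at discrete times $t$, such that $$\log(p_{1,t+1})=\log(p_{1t})+\mu_1+\delta_{1,t+1},\quad \epsilon_{at}:=\log(p_{2t})-\log(p_{1t}),\quad \epsilon_{bt}:=\log(p_{3t})-\log(p_{1t}),$$ where the $\delta_{1t}$ are i.i.d. $N(0,\sigma_1^2)$, the $\epsilon_{at}$ are i.i.d. $N(0,\sigma_a^2)$, the $\epsilon_{bt}$ are i.i.d. $N(0,\sigma_b^2)$, and the three families $(\delta_{1t})_t$, $(\epsilon_{at})_t$, $(\epsilon_{bt})_t$ are mutually independent. Define stock returns $r_{i,t+1}=p_{i,t+1}/p_{it}-1$, signals $$S_{at}=\mathbb{1}\{\epsilon_{at}\le -k\sigma_a\}-\mathbb{1}\{\epsilon_{at}\ge k\sigma_a\},\qquad S_{bt}=\mathbb{1}\{\epsilon_{bt}\le -k\sigma_b\}-\mathbb{1}\{\epsilon_{bt}\ge k\sigma_b\},$$ and pair returns $r_{a,t+1}=S_{at}(r_{2,t+1}-r_{1,t+1})$, $r_{b,t+1}=S_{bt}(r_{3,t+1}-r_{1,t+1})$. Then $$\operatorname{Cov}(r_{a,t},r_{b,t})=\big(e^{\sigma_1^2}-1\big)\,\mathbf{E}[r_{a,t}]\,\mathbf{E}[r_{b,t}].$$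
   Context: Pairs $a=$ (stock 1, stock 2) and $b=$ (stock 1, stock 3) are two cointegrated pairs sharing stock 1. *)

theory Defs
  imports "HOL-Probability.Probability"
begin

definition ret :: "(nat \<Rightarrow> real) \<Rightarrow> nat \<Rightarrow> real" where
  "ret p t = p (Suc t) / p t - 1"

definition signal :: "real \<Rightarrow> real \<Rightarrow> real \<Rightarrow> real" where
  "signal k \<sigma> e = (if e \<le> - k * \<sigma> then 1 else 0) - (if e \<ge> k * \<sigma> then 1 else 0)"

definition pair_ret :: "real \<Rightarrow> real \<Rightarrow> (nat \<Rightarrow> real) \<Rightarrow> (nat \<Rightarrow> real) \<Rightarrow> (nat \<Rightarrow> real) \<Rightarrow> nat \<Rightarrow> real" where
  "pair_ret k \<sigma> eps p q t = signal k \<sigma> (eps t) * (ret q t - ret p t)"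

definition cov :: "'a measure \<Rightarrow> ('a \<Rightarrow> real) \<Rightarrow> ('a \<Rightarrow> real) \<Rightarrow> real" where
  "cov M X Y = (\<integral>\<omega>. X \<omega> * Y \<omega> \<partial>M) - (\<integral>\<omega>. X \<omega> \<partial>M) * (\<integral>\<omega>. Y \<omega> \<partial>M)"

text \<open>Joint family of all innovations: index (0,t) = delta_1t, (1,t) = eps_at, (2,t) = eps_bt.\<close>
definition innov :: "(nat \<Rightarrow> 'a \<Rightarrow> real) \<Rightarrow> (nat \<Rightarrow> 'a \<Rightarrow> real) \<Rightarrow> (nat \<Rightarrow> 'a \<Rightarrow> real) \<Rightarrow> nat \<times> nat \<Rightarrow> 'a \<Rightarrow> real" where
  "innov d ea eb i = (if fst i = 0 then d (snd i) else if fst i = 1 then ea (snd i) else eb (snd i))"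

end

theory Submission
  imports Defs
begin

lemma normal_exp_moment:
  fixes \<sigma> c :: real
  assumes "\<sigma> > 0"
  shows "has_bochner_integral lborel (\<lambda>x. normal_density 0 \<sigma> x * exp (c * x)) (exp (c\<^sup>2 * \<sigma>\<^sup>2 / 2))"
proof -
  have eq: "normal_density 0 \<sigma> x * exp (c * x) = exp (c\<^sup>2 * \<sigma>\<^sup>2 / 2) * normal_density (c * \<sigma>\<^sup>2) \<sigma> x" for x
  proof -
    have "-(x - 0)\<^sup>2 / (2 * \<sigma>\<^sup>2) + c * x = c\<^sup>2 * \<sigma>\<^sup>2 / 2 + (-(x - c * \<sigma>\<^sup>2)\<^sup>2 / (2 * \<sigma>\<^sup>2))"
      using assms by (simp add: field_simps power2_eq_square)
    then have "exp (-(x - 0)\<^sup>2 / (2 * \<sigma>\<^sup>2)) * exp (c * x) = exp (c\<^sup>2 * \<sigma>\<^sup>2 / 2) * exp (-(x - c * \<sigma>\<^sup>2)\<^sup>2 / (2 * \<sigma>\<^sup>2))"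
      by (metis exp_add)
    then show ?thesis unfolding normal_density_def by (simp add: algebra_simps)
  qed
  have "has_bochner_integral lborel (normal_density (c * \<sigma>\<^sup>2) \<sigma>) 1"
    using assms has_bochner_integral_integrable[OF integrable_normal_density] by simp
  from has_bochner_integral_mult_right[OF this, of "exp (c\<^sup>2 * \<sigma>\<^sup>2 / 2)"]
  show ?thesis unfolding eq by simp
qed

lemma dist_exp_moment:
  assumes "distributed M lborel X (\<lambda>x. ennreal (normal_density 0 \<sigma> x))" "\<sigma> > 0"
  shows "integrable M (\<lambda>\<omega>. exp (c * X \<omega>))" "(\<integral>\<omega>. exp (c * X \<omega>) \<partial>M) = exp (c\<^sup>2 * \<sigma>\<^sup>2 / 2)"
proof -
  note h = normal_exp_moment[OF assms(2), of c]
  show "integrable M (\<lambda>\<omega>. exp (c * X \<omega>))"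
    using distributed_integrable[OF assms(1), of "\<lambda>x. exp (c * x)"] h
    by (simp add: has_bochner_integral_iff)
  show "(\<integral>\<omega>. exp (c * X \<omega>) \<partial>M) = exp (c\<^sup>2 * \<sigma>\<^sup>2 / 2)"
    using distributed_integral[OF assms(1), of "\<lambda>x. exp (c * x)"] h
    by (simp add: has_bochner_integral_iff)
qed

lemma exp_diff_le: "exp ((x::real) - y) \<le> exp (2 * x) + exp (- 2 * y)"
proof -
  have "exp (x - y) = exp x * exp (- y)" by (metis diff_conv_add_uminus exp_add)
  also have "\<dots> \<le> (exp x)\<^sup>2 + (exp (- y))\<^sup>2"
  proof -
    have h1: "0 \<le> (exp x - exp (- y))\<^sup>2" by simp
    have h2: "(exp x - exp (- y))\<^sup>2 = (exp x)\<^sup>2 + (exp (- y))\<^sup>2 - 2 * (exp x * exp (- y))"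
      by (simp add: power2_diff)
    have h3: "0 \<le> exp x * exp (- y)" by simp
    show ?thesis using h1 h2 h3 by linarith
  qed
  also have "\<dots> = exp (2 * x) + exp (- 2 * y)"
    by (simp add: power2_eq_square exp_add[symmetric])
  finally show ?thesis .
qed

lemma indep3:
  fixes M :: "'a measure" and \<delta>1 \<epsilon>a \<epsilon>b :: "nat \<Rightarrow> 'a \<Rightarrow> real" and g :: "real \<Rightarrow> real"
  assumes "prob_space M"
    and indep: "prob_space.indep_vars M (\<lambda>_. borel) (innov \<delta>1 \<epsilon>a \<epsilon>b) ({0, 1, 2} \<times> UNIV)"
    and g: "g \<in> borel_measurable borel"
  shows "prob_space.indep_vars M (\<lambda>_. borel)
     (\<lambda>j \<omega>. if j = 0 then g (\<delta>1 (Suc s) \<omega>)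
            else if j = 1 then signal k \<sigma>a (\<epsilon>a s \<omega>) * (exp (\<epsilon>a (Suc s) \<omega> - \<epsilon>a s \<omega>) - 1)
            else signal k \<sigma>b (\<epsilon>b s \<omega>) * (exp (\<epsilon>b (Suc s) \<omega> - \<epsilon>b s \<omega>) - 1)) {0, 1, 2::nat}"
proof -
  interpret prob_space M by fact
  define K where "K j = (if j = 0 then {(0::nat, Suc s)} else {(j, s), (j, Suc s)})" for j :: nat
  have "indep_vars (\<lambda>j. PiM (K j) (\<lambda>_. borel)) (\<lambda>j \<omega>. restrict (\<lambda>i. innov \<delta>1 \<epsilon>a \<epsilon>b i \<omega>) (K j)) {0,1,2}"
    by (rule indep_vars_restrict[OF indep]) (auto simp: K_def disjoint_family_on_def)
  then have "indep_vars (\<lambda>_. borel)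
     (\<lambda>j \<omega>. (\<lambda>f. if j = 0 then g (f (0, Suc s))
            else if j = 1 then signal k \<sigma>a (f (1, s)) * (exp (f (1, Suc s) - f (1, s)) - 1)
            else signal k \<sigma>b (f (2, s)) * (exp (f (2, Suc s) - f (2, s)) - 1))
       (restrict (\<lambda>i. innov \<delta>1 \<epsilon>a \<epsilon>b i \<omega>) (K j))) {0,1,2}"
  proof (rule indep_vars_compose2)
    fix j :: nat assume j: "j \<in> {0,1,2}"
    then consider "j = 0" | "j = 1" | "j = 2" by auto
    then show "(\<lambda>f. if j = 0 then g (f (0, Suc s))
            else if j = 1 then signal k \<sigma>a (f (1, s)) * (exp (f (1, Suc s) - f (1, s)) - 1)
            else signal k \<sigma>b (f (2, s)) * (exp (f (2, Suc s) - f (2, s)) - 1))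
          \<in> borel_measurable (PiM (K j) (\<lambda>_. borel))"
    proof cases
      case 1 then show ?thesis using g by (simp add: K_def) measurable
    next
      case 2 then show ?thesis by (simp add: K_def signal_def) measurable
    next
      case 3 then show ?thesis by (simp add: K_def signal_def) measurable
    qed
  qed
  then show ?thesis
    by (rule indep_vars_cong[THEN iffD1, rotated 3]) (auto simp: K_def innov_def)
qed

theorem theorem2:
  fixes M :: "'a measure"
    and p1 p2 p3 \<delta>1 \<epsilon>a \<epsilon>b :: "nat \<Rightarrow> 'a \<Rightarrow> real"
    and \<mu>1 \<sigma>1 \<sigma>a \<sigma>b k :: real
  assumes "prob_space M"
    and "\<sigma>1 > 0" and "\<sigma>a > 0" and "\<sigma>b > 0" and "k > 0"
    and pos: "\<And>t \<omega>. \<omega> \<in> space M \<Longrightarrow> p1 t \<omega> > 0 \<and> p2 t \<omega> > 0 \<and> p3 t \<omega> > 0"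
    and rw: "\<And>t \<omega>. \<omega> \<in> space M \<Longrightarrow> ln (p1 (Suc t) \<omega>) = ln (p1 t \<omega>) + \<mu>1 + \<delta>1 (Suc t) \<omega>"
    and ea: "\<And>t \<omega>. \<omega> \<in> space M \<Longrightarrow> \<epsilon>a t \<omega> = ln (p2 t \<omega>) - ln (p1 t \<omega>)"
    and eb: "\<And>t \<omega>. \<omega> \<in> space M \<Longrightarrow> \<epsilon>b t \<omega> = ln (p3 t \<omega>) - ln (p1 t \<omega>)"
    and d_dist: "\<And>t. distributed M lborel (\<delta>1 t) (\<lambda>x. ennreal (normal_density 0 \<sigma>1 x))"
    and a_dist: "\<And>t. distributed M lborel (\<epsilon>a t) (\<lambda>x. ennreal (normal_density 0 \<sigma>a x))"
    and b_dist: "\<And>t. distributed M lborel (\<epsilon>b t) (\<lambda>x. ennreal (normal_density 0 \<sigma>b x))"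
    and indep: "prob_space.indep_vars M (\<lambda>_. borel) (innov \<delta>1 \<epsilon>a \<epsilon>b) ({0, 1, 2} \<times> UNIV)"
  shows "cov M (\<lambda>\<omega>. pair_ret k \<sigma>a (\<lambda>t. \<epsilon>a t \<omega>) (\<lambda>t. p1 t \<omega>) (\<lambda>t. p2 t \<omega>) s)
               (\<lambda>\<omega>. pair_ret k \<sigma>b (\<lambda>t. \<epsilon>b t \<omega>) (\<lambda>t. p1 t \<omega>) (\<lambda>t. p3 t \<omega>) s)
         = (exp (\<sigma>1\<^sup>2) - 1)
           * (\<integral>\<omega>. pair_ret k \<sigma>a (\<lambda>t. \<epsilon>a t \<omega>) (\<lambda>t. p1 t \<omega>) (\<lambda>t. p2 t \<omega>) s \<partial>M)
           * (\<integral>\<omega>. pair_ret k \<sigma>b (\<lambda>t. \<epsilon>b t \<omega>) (\<lambda>t. p1 t \<omega>) (\<lambda>t. p3 t \<omega>) s \<partial>M)"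
proof -
  interpret prob_space M by fact
  define G where "G \<omega> = exp (\<mu>1 + \<delta>1 (Suc s) \<omega>)" for \<omega>
  define A where "A \<omega> = signal k \<sigma>a (\<epsilon>a s \<omega>) * (exp (\<epsilon>a (Suc s) \<omega> - \<epsilon>a s \<omega>) - 1)" for \<omega>
  define B where "B \<omega> = signal k \<sigma>b (\<epsilon>b s \<omega>) * (exp (\<epsilon>b (Suc s) \<omega> - \<epsilon>b s \<omega>) - 1)" for \<omega>
  have rv: "innov \<delta>1 \<epsilon>a \<epsilon>b i \<in> borel_measurable M" if "i \<in> {0,1,2} \<times> UNIV" for i
    using indep that unfolding indep_vars_def by auto
  have [measurable]: "\<delta>1 t \<in> borel_measurable M" for t
    using rv[of "(0,t)"] by (simp add: innov_def)
  have [measurable]: "\<epsilon>a t \<in> borel_measurable M" for t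
    using rv[of "(1,t)"] by (simp add: innov_def)
  have [measurable]: "\<epsilon>b t \<in> borel_measurable M" for t
    using rv[of "(2,t)"] by (simp add: innov_def)
  have [measurable]: "G \<in> borel_measurable M" "A \<in> borel_measurable M" "B \<in> borel_measurable M"
    unfolding G_def A_def B_def signal_def by measurable

  have gen: "pair_ret k \<sigma> (\<lambda>t. e t \<omega>) (\<lambda>t. p1 t \<omega>) (\<lambda>t. q t \<omega>) s
      = G \<omega> * (signal k \<sigma> (e s \<omega>) * (exp (e (Suc s) \<omega> - e s \<omega>) - 1))"
    if \<omega>: "\<omega> \<in> space M" and qpos: "\<And>t. q t \<omega> > 0"
      and e: "\<And>t. e t \<omega> = ln (q t \<omega>) - ln (p1 t \<omega>)" for \<sigma> e q \<omega>
  proof -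
    have p1p: "\<And>t. p1 t \<omega> > 0" using pos \<omega> by blast
    have G: "G \<omega> = p1 (Suc s) \<omega> / p1 s \<omega>"
    proof -
      have "G \<omega> = exp (ln (p1 (Suc s) \<omega>) - ln (p1 s \<omega>))"
        unfolding G_def using rw[OF \<omega>, of s] by simp
      also have "\<dots> = p1 (Suc s) \<omega> / p1 s \<omega>" using p1p by (simp add: exp_diff)
      finally show ?thesis .
    qed
    have E: "exp (e t \<omega>) = q t \<omega> / p1 t \<omega>" for t
      using e[of t] p1p qpos by (simp add: exp_diff)
    have "exp (e (Suc s) \<omega> - e s \<omega>) = exp (e (Suc s) \<omega>) / exp (e s \<omega>)" by (simp add: exp_diff)
    also have "\<dots> = (q (Suc s) \<omega> / p1 (Suc s) \<omega>) / (q s \<omega> / p1 s \<omega>)" by (simp add: E)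
    finally have X: "exp (e (Suc s) \<omega> - e s \<omega>) = (q (Suc s) \<omega> / p1 (Suc s) \<omega>) / (q s \<omega> / p1 s \<omega>)" .
    show ?thesis
      unfolding pair_ret_def ret_def G X
      using p1p[of s] p1p[of "Suc s"] qpos[of s] qpos[of "Suc s"]
      by (simp add: field_simps)
  qed
  have pa: "pair_ret k \<sigma>a (\<lambda>t. \<epsilon>a t \<omega>) (\<lambda>t. p1 t \<omega>) (\<lambda>t. p2 t \<omega>) s = G \<omega> * A \<omega>"
    if "\<omega> \<in> space M" for \<omega>
    unfolding A_def by (rule gen[OF that]) (use pos[OF that] ea[OF that] in auto)
  have pb: "pair_ret k \<sigma>b (\<lambda>t. \<epsilon>b t \<omega>) (\<lambda>t. p1 t \<omega>) (\<lambda>t. p3 t \<omega>) s = G \<omega> * B \<omega>"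
    if "\<omega> \<in> space M" for \<omega>
    unfolding B_def by (rule gen[OF that]) (use pos[OF that] eb[OF that] in auto)

  note dA = dist_exp_moment[OF a_dist \<open>\<sigma>a > 0\<close>]
  note dB = dist_exp_moment[OF b_dist \<open>\<sigma>b > 0\<close>]
  note dD = dist_exp_moment[OF d_dist \<open>\<sigma>1 > 0\<close>]

  have Geq: "G \<omega> = exp \<mu>1 * exp (1 * \<delta>1 (Suc s) \<omega>)" for \<omega>
    unfolding G_def by (simp add: exp_add)
  have G2eq: "G \<omega> ^ 2 = exp (2 * \<mu>1) * exp (2 * \<delta>1 (Suc s) \<omega>)" for \<omega>
    unfolding G_def by (simp add: exp_add[symmetric] power2_eq_square algebra_simps)
  have intG: "integrable M G"
    unfolding Geq by (intro integrable_mult_right dD(1))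
  have intG2: "integrable M (\<lambda>\<omega>. G \<omega> ^ 2)"
    unfolding G2eq by (intro integrable_mult_right dD(1))
  have EG: "(\<integral>\<omega>. G \<omega> \<partial>M) = exp \<mu>1 * exp (\<sigma>1\<^sup>2 / 2)"
    unfolding Geq using dD(2)[of 1] by simp
  have EG2: "(\<integral>\<omega>. G \<omega> ^ 2 \<partial>M) = exp (2 * \<mu>1) * exp (2 * \<sigma>1\<^sup>2)"
    unfolding G2eq using dD(2)[of 2] by simp

  have sig: "\<bar>signal k \<sigma> x\<bar> \<le> 1" for \<sigma> x
    unfolding signal_def by auto
  have bound: "\<bar>signal k \<sigma> (x s) * (exp (x (Suc s) - x s) - 1)\<bar>
      \<le> 1 + exp (2 * x (Suc s)) + exp (- 2 * x s)" for \<sigma> and x :: "nat \<Rightarrow> real"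
  proof -
    have "\<bar>signal k \<sigma> (x s) * (exp (x (Suc s) - x s) - 1)\<bar>
        = \<bar>signal k \<sigma> (x s)\<bar> * \<bar>exp (x (Suc s) - x s) - 1\<bar>" by (simp add: abs_mult)
    also have "\<dots> \<le> 1 * \<bar>exp (x (Suc s) - x s) - 1\<bar>"
      by (intro mult_right_mono sig) simp
    also have "\<dots> \<le> 1 + exp (x (Suc s) - x s)"
      using exp_gt_zero[of "x (Suc s) - x s"] by (simp add: abs_le_iff)
    also have "\<dots> \<le> 1 + exp (2 * x (Suc s)) + exp (- 2 * x s)"
      using exp_diff_le[of "x (Suc s)" "x s"] by simp
    finally show ?thesis .
  qed
  have intA: "integrable M A"
  proof (rule Bochner_Integration.integrable_bound)
    show "integrable M (\<lambda>\<omega>. 1 + exp (2 * \<epsilon>a (Suc s) \<omega>) + exp (- 2 * \<epsilon>a s \<omega>))"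
      by (intro Bochner_Integration.integrable_add dA(1) integrable_const)
    show "A \<in> borel_measurable M" by measurable
    show "AE \<omega> in M. norm (A \<omega>) \<le> norm (1 + exp (2 * \<epsilon>a (Suc s) \<omega>) + exp (- 2 * \<epsilon>a s \<omega>))"
      using bound[of \<sigma>a "\<lambda>t. \<epsilon>a t _"] unfolding A_def by (auto intro!: AE_I2 simp: add_pos_pos)
  qed
  have intB: "integrable M B"
  proof (rule Bochner_Integration.integrable_bound)
    show "integrable M (\<lambda>\<omega>. 1 + exp (2 * \<epsilon>b (Suc s) \<omega>) + exp (- 2 * \<epsilon>b s \<omega>))"
      by (intro Bochner_Integration.integrable_add dB(1) integrable_const)
    show "B \<in> borel_measurable M" by measurable
    show "AE \<omega> in M. norm (B \<omega>) \<le> norm (1 + exp (2 * \<epsilon>b (Suc s) \<omega>) + exp (- 2 * \<epsilon>b s \<omega>))"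
      using bound[of \<sigma>b "\<lambda>t. \<epsilon>b t _"] unfolding B_def by (auto intro!: AE_I2 simp: add_pos_pos)
  qed

  define F where "F g j \<omega> = (if j = 0 then g (\<delta>1 (Suc s) \<omega>) else if j = 1 then A \<omega> else B \<omega>)"
    for g :: "real \<Rightarrow> real" and j :: nat and \<omega>
  have indF: "indep_vars (\<lambda>_. borel) (F g) {0,1,2}" if "g \<in> borel_measurable borel" for g
    unfolding F_def A_def B_def by (rule indep3[OF \<open>prob_space M\<close> indep that])
  have g1: "(\<lambda>x. exp (\<mu>1 + x)) \<in> borel_measurable borel" by measurable
  have g2: "(\<lambda>x. (exp (\<mu>1 + x))^2) \<in> borel_measurable borel" by measurable
  have F1: "F (\<lambda>x. exp (\<mu>1 + x)) 0 = G" unfolding F_def G_def by auto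
  have F2: "F (\<lambda>x. (exp (\<mu>1 + x))^2) 0 = (\<lambda>\<omega>. G \<omega> ^ 2)" unfolding F_def G_def by auto
  have FA: "F g 1 = A" "F g 2 = B" "F g (Suc 0) = A" for g unfolding F_def by auto

  have EGA: "(\<integral>\<omega>. G \<omega> * A \<omega> \<partial>M) = (\<integral>\<omega>. G \<omega> \<partial>M) * (\<integral>\<omega>. A \<omega> \<partial>M)"
  proof -
    have "indep_vars (\<lambda>_. borel) (F (\<lambda>x. exp (\<mu>1 + x))) {0,1}"
      by (rule indep_vars_subset[OF indF[OF g1]]) auto
    then have "(\<integral>\<omega>. (\<Prod>i\<in>{0,1}. F (\<lambda>x. exp (\<mu>1 + x)) i \<omega>) \<partial>M) = (\<Prod>i\<in>{0,1}. \<integral>\<omega>. F (\<lambda>x. exp (\<mu>1 + x)) i \<omega> \<partial>M)"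
      by (rule indep_vars_lebesgue_integral[rotated]) (auto simp: F1 FA intG intA)
    then show ?thesis by (simp add: F1 FA)
  qed
  have EGB: "(\<integral>\<omega>. G \<omega> * B \<omega> \<partial>M) = (\<integral>\<omega>. G \<omega> \<partial>M) * (\<integral>\<omega>. B \<omega> \<partial>M)"
  proof -
    have "indep_vars (\<lambda>_. borel) (F (\<lambda>x. exp (\<mu>1 + x))) {0,2}"
      by (rule indep_vars_subset[OF indF[OF g1]]) auto
    then have "(\<integral>\<omega>. (\<Prod>i\<in>{0,2}. F (\<lambda>x. exp (\<mu>1 + x)) i \<omega>) \<partial>M) = (\<Prod>i\<in>{0,2}. \<integral>\<omega>. F (\<lambda>x. exp (\<mu>1 + x)) i \<omega> \<partial>M)"
      by (rule indep_vars_lebesgue_integral[rotated]) (auto simp: F1 FA intG intB)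
    then show ?thesis by (simp add: F1 FA)
  qed
  have EGGAB: "(\<integral>\<omega>. G \<omega> ^ 2 * (A \<omega> * B \<omega>) \<partial>M) = (\<integral>\<omega>. G \<omega> ^ 2 \<partial>M) * ((\<integral>\<omega>. A \<omega> \<partial>M) * (\<integral>\<omega>. B \<omega> \<partial>M))"
  proof -
    have "(\<integral>\<omega>. (\<Prod>i\<in>{0,1,2}. F (\<lambda>x. (exp (\<mu>1 + x))^2) i \<omega>) \<partial>M) = (\<Prod>i\<in>{0,1,2}. \<integral>\<omega>. F (\<lambda>x. (exp (\<mu>1 + x))^2) i \<omega> \<partial>M)"
      by (rule indep_vars_lebesgue_integral[OF _ indF[OF g2]]) (auto simp: F2 FA intG2 intA intB)
    then show ?thesis by (simp add: F2 FA)
  qed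

  have c1: "(\<integral>\<omega>. pair_ret k \<sigma>a (\<lambda>t. \<epsilon>a t \<omega>) (\<lambda>t. p1 t \<omega>) (\<lambda>t. p2 t \<omega>) s \<partial>M) = (\<integral>\<omega>. G \<omega> * A \<omega> \<partial>M)"
    by (rule Bochner_Integration.integral_cong) (simp_all add: pa)
  have c2: "(\<integral>\<omega>. pair_ret k \<sigma>b (\<lambda>t. \<epsilon>b t \<omega>) (\<lambda>t. p1 t \<omega>) (\<lambda>t. p3 t \<omega>) s \<partial>M) = (\<integral>\<omega>. G \<omega> * B \<omega> \<partial>M)"
    by (rule Bochner_Integration.integral_cong) (simp_all add: pb)
  have c3: "(\<integral>\<omega>. pair_ret k \<sigma>a (\<lambda>t. \<epsilon>a t \<omega>) (\<lambda>t. p1 t \<omega>) (\<lambda>t. p2 t \<omega>) s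
       * pair_ret k \<sigma>b (\<lambda>t. \<epsilon>b t \<omega>) (\<lambda>t. p1 t \<omega>) (\<lambda>t. p3 t \<omega>) s \<partial>M)
      = (\<integral>\<omega>. G \<omega> ^ 2 * (A \<omega> * B \<omega>) \<partial>M)"
    by (rule Bochner_Integration.integral_cong) (simp_all add: pa pb power2_eq_square)
  have key: "exp (2 * \<mu>1) * exp (2 * \<sigma>1\<^sup>2) - (exp \<mu>1 * exp (\<sigma>1\<^sup>2 / 2))^2
      = (exp (\<sigma>1\<^sup>2) - 1) * (exp \<mu>1 * exp (\<sigma>1\<^sup>2 / 2))^2"
  proof -
    have "(exp \<mu>1 * exp (\<sigma>1\<^sup>2 / 2))^2 = exp (2 * \<mu>1) * exp (\<sigma>1\<^sup>2)"
      by (simp add: power_mult_distrib exp_double[symmetric] power2_eq_square exp_add[symmetric])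
    moreover have "exp (2 * \<sigma>1\<^sup>2) = exp (\<sigma>1\<^sup>2) * exp (\<sigma>1\<^sup>2)"
      by (simp add: exp_add[symmetric])
    ultimately show ?thesis by (simp add: algebra_simps)
  qed
  show ?thesis
    unfolding cov_def c1 c2 c3 EGGAB EGA EGB EG EG2
    using key by (simp add: algebra_simps power2_eq_square)
qed

end
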